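(* For a discrete memoryless channel $Q$ with strictly positive capacity (in the asynchronous communication model described in the context), any asynchronism exponent strictly less than $\max_{x\in\mathcal X}D(Q(\cdot|x)\|Q(\cdot|\star))$ is achievable by a coding strategy (a sequence of codes with sequential decoders indexed by blocklength $N$, with $M=M_N$ messages) that satisfies $\lim_{N\to\infty}\frac{\ln M}{N}>0$.
   Context: Model. A discrete memoryless channel has finite input alphabet $\mathcal X$, finite output alphabet $\mathcal Y$, transition probabilities $Q(y|x)$, and a distinguished "noise" input symbol $\star\in\mathcal X$; for every $y$ there is $x$ with $Q(y|x)>0$. A code consists of $M\ge2$ equally likely messages, codewords $c^N(m)\in\mathcal X^N$, and a sequential decoder. The asynchronism level is an integer $A\ge1$: the start time $\nu$ is uniform on $\{1,\dots,A\}$, independent of the message. Given message $m$ and $\nu$, outputs $Y_1,Y_2,\dots$ are independent with $Y_i\sim Q(\cdot|\star)$ if $i\le\nu-1$ or $i\ge\nu+N$, and $Y_i\sim Q(\cdot|c_{i-\nu+1}(m))$ for $\nu\le i\le\nu+N-1$. The receiver knows $A$ and the code but not $\nu$. A decoder is $(\tau,\phi)$ with $\tau$ a stopping time w.r.t. $Y_1,Y_2,\dots$ and $\phi$ a function of $Y_1,\dots,Y_\tau$ returning a message. With $\mathbb P_{m,l},\mathbb E_{m,l}$ conditioning on message $m$ and $\nu=l$: $\mathbb P(\mathcal E)=\frac1{AM}\sum_{m,l}\mathbb P_{m,l}(\phi\neq m)$, $\mathbb E(\tau-\nu)^+=\frac1{AM}\sum_{m,l}\mathbb E_{m,l}(\tau-l)^+$,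 rate $R=\ln M/\mathbb E(\tau-\nu)^+$. An asynchronism exponent $\alpha$ is achievable (at rate $R$) if for every $\varepsilon>0$ there is a code with (sufficiently large) blocklength $N$ operating at asynchronism level $A=e^{(\alpha-\varepsilon)N}$ with rate at least $R-\varepsilon$ and $\mathbb P(\mathcal E)\le\varepsilon$; "achievable" without a rate means achievable at rate $0$. $D$ is Kullback–Leibler divergence (possibly $+\infty$). *)

theory Defs
  imports "HOL-Probability.Probability"
begin

text \<open>Output sequences are y :: nat \<Rightarrow> 'y, the paper's Y_i being y i for i \<ge> 1
 (y 0 is an unused dummy coordinate that decoders may not look at).\<close>

definition kl_div :: "'y::finite pmf \<Rightarrow> 'y pmf \<Rightarrow> ereal" where
  "kl_div p q =
     (if \<forall>y. pmf p y > 0 \<longrightarrow> pmf q y > 0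
      then ereal (\<Sum>y\<in>UNIV. if pmf p y = 0 then 0 else pmf p y * ln (pmf p y / pmf q y))
      else \<infinity>)"

definition mutual_info :: "('x::finite \<Rightarrow> 'y::finite pmf) \<Rightarrow> 'x pmf \<Rightarrow> real" where
  "mutual_info Q P =
     (\<Sum>x\<in>UNIV. \<Sum>y\<in>UNIV.
        if pmf P x * pmf (Q x) y = 0 then 0
        else pmf P x * pmf (Q x) y *
             ln (pmf (Q x) y / (\<Sum>x'\<in>UNIV. pmf P x' * pmf (Q x') y)))"

definition capacity :: "('x::finite \<Rightarrow> 'y::finite pmf) \<Rightarrow> real" where
  "capacity Q = (SUP P. mutual_info Q P)"

text \<open>Sequential decoder (tau, phi): tau a stopping time w.r.t. Y_1, Y_2, ...
 and phi a function of Y_1..Y_tau.\<close>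
definition valid_decoder :: "((nat \<Rightarrow> 'y) \<Rightarrow> nat) \<times> ((nat \<Rightarrow> 'y) \<Rightarrow> nat) \<Rightarrow> bool" where
  "valid_decoder d \<longleftrightarrow>
     (\<forall>y y'. (\<forall>i\<in>{1..fst d y}. y i = y' i) \<longrightarrow> fst d y' = fst d y \<and> snd d y' = snd d y)"

definition out_measure ::
  "('x \<Rightarrow> 'y pmf) \<Rightarrow> 'x \<Rightarrow> nat \<Rightarrow> (nat \<Rightarrow> 'x) \<Rightarrow> nat \<Rightarrow> (nat \<Rightarrow> 'y) measure" where
  "out_measure Q star N c l =
     PiM UNIV (\<lambda>i. measure_pmf (if l \<le> i \<and> i < l + N then Q (c (i - l)) else Q star))"

definition error_prob ::
  "('x \<Rightarrow> 'y pmf) \<Rightarrow> 'x \<Rightarrow> nat \<Rightarrow> nat \<Rightarrow> (nat \<Rightarrow> nat \<Rightarrow> 'x)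
   \<Rightarrow> ((nat \<Rightarrow> 'y) \<Rightarrow> nat) \<times> ((nat \<Rightarrow> 'y) \<Rightarrow> nat) \<Rightarrow> nat \<Rightarrow> real" where
  "error_prob Q star N M cw d A =
     (1 / (real A * real M)) *
     (\<Sum>m<M. \<Sum>l\<in>{1..A}. measure (out_measure Q star N (cw m) l) {y. snd d y \<noteq> m})"

definition async_level :: "real \<Rightarrow> real \<Rightarrow> nat \<Rightarrow> nat" where
  "async_level \<alpha> \<epsilon> N = nat \<lceil>exp ((\<alpha> - \<epsilon>) * real N)\<rceil>"

end

theory Submission
  imports Defs "HOL-Real_Asymp.Real_Asymp"
begin


lemma prob_cyl:
  fixes p :: "nat \<Rightarrow> 'y::finite pmf"
  assumes J: "finite J" and dep: "\<And>y y'. (\<forall>i\<in>J. y i = y' i) \<Longrightarrow> y \<in> E \<longleftrightarrow> y' \<in> E"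
  shows "measure (PiM UNIV (\<lambda>i. measure_pmf (p i))) E =
     (\<Sum>z\<in>PiE J (\<lambda>_. UNIV) \<inter> E. \<Prod>i\<in>J. pmf (p i) (z i))"
proof -
  let ?M = "\<lambda>i. measure_pmf (p i)"
  interpret P: product_prob_space ?M UNIV
    by (rule product_prob_spaceI) (simp add: prob_space_measure_pmf)
  let ?X = "PiE J (\<lambda>_. UNIV) \<inter> E"
  have finX: "finite ?X" using J by (intro finite_Int disjI1 finite_PiE) auto
  have sing: "{z} \<in> sets (PiM J ?M)" if "z \<in> ?X" for z
  proof -
    have "{z} = PiE J (\<lambda>i. {z i})" using that by (auto simp: PiE_iff extensional_def fun_eq_iff) (metis)
    also have "\<dots> \<in> sets (PiM J ?M)" using J by (intro sets_PiM_I_finite) auto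
    finally show ?thesis .
  qed
  have Xs: "?X \<in> sets (PiM J ?M)"
  proof -
    have "?X = (\<Union>z\<in>?X. {z})" by auto
    also have "\<dots> \<in> sets (PiM J ?M)" using finX sing by (intro sets.finite_UN) auto
    finally show ?thesis .
  qed
  have embE: "prod_emb UNIV ?M J ?X = E"
  proof -
    have "restrict x J \<in> E \<longleftrightarrow> x \<in> E" for x by (rule dep) simp
    then show ?thesis unfolding prod_emb_def by (auto simp: space_PiM)
  qed
  have "emeasure (PiM UNIV ?M) E = emeasure (PiM J ?M) ?X"
    using P.emeasure_PiM_emb'[of J ?X] J Xs embE by simp
  also have "\<dots> = (\<Sum>z\<in>?X. emeasure (PiM J ?M) {z})"
    using finX sing by (rule emeasure_eq_sum_singleton)
  also have "\<dots> = (\<Sum>z\<in>?X. ennreal (\<Prod>i\<in>J. pmf (p i) (z i)))"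
  proof (rule sum.cong[OF refl])
    fix z assume z: "z \<in> ?X"
    have "{z} = PiE J (\<lambda>i. {z i})" using z by (auto simp: PiE_iff extensional_def fun_eq_iff) (metis)
    then have "emeasure (PiM J ?M) {z} = (\<Prod>i\<in>J. emeasure (?M i) {z i})"
      using J by (simp add: P.emeasure_PiM)
    also have "\<dots> = (\<Prod>i\<in>J. ennreal (pmf (p i) (z i)))" by (simp add: emeasure_pmf_single)
    finally show "emeasure (PiM J ?M) {z} = ennreal (\<Prod>i\<in>J. pmf (p i) (z i))"
      by (simp add: prod_ennreal)
  qed
  also have "\<dots> = ennreal (\<Sum>z\<in>?X. \<Prod>i\<in>J. pmf (p i) (z i))"
    by (simp add: sum_ennreal prod_nonneg)
  finally show ?thesis
    by (simp add: measure_def sum_nonneg prod_nonneg)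
qed



definition lik :: "('x \<Rightarrow> 'y pmf) \<Rightarrow> nat set \<Rightarrow> (nat \<Rightarrow> 'x) \<Rightarrow> (nat \<Rightarrow> 'y) \<Rightarrow> real" where
  "lik Q J h z = (\<Prod>i\<in>J. pmf (Q (h i)) (z i))"

lemma lik_nonneg: "lik Q J h z \<ge> 0" unfolding lik_def by (simp add: prod_nonneg)

lemma sum_prod_UNIV:
  fixes f :: "nat \<Rightarrow> 'y::finite \<Rightarrow> real"
  assumes "finite J"
  shows "(\<Sum>z\<in>PiE J (\<lambda>_. UNIV). \<Prod>i\<in>J. f i (z i)) = (\<Prod>i\<in>J. \<Sum>y\<in>UNIV. f i y)"
  using prod_sum_PiE[of J "\<lambda>_. UNIV" f] assms by simp

lemma sqrt_prod: "sqrt (prod f A) = (\<Prod>i\<in>A. sqrt (f i))"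
  by (induction A rule: infinite_finite_induct) (auto simp: real_sqrt_mult)

lemma bhatt_bound:
  fixes Q :: "'x \<Rightarrow> 'y::finite pmf"
  assumes J: "finite J"
  shows "(\<Sum>z\<in>PiE J (\<lambda>_. UNIV). lik Q J h z * (if lik Q J h z \<le> lik Q J h' z then 1 else 0))
         \<le> (\<Prod>i\<in>J. \<Sum>y\<in>UNIV. sqrt (pmf (Q (h i)) y * pmf (Q (h' i)) y))"
proof -
  have "(\<Sum>z\<in>PiE J (\<lambda>_. UNIV). lik Q J h z * (if lik Q J h z \<le> lik Q J h' z then 1 else 0))
       \<le> (\<Sum>z\<in>PiE J (\<lambda>_. UNIV). \<Prod>i\<in>J. sqrt (pmf (Q (h i)) (z i) * pmf (Q (h' i)) (z i)))"
  proof (rule sum_mono)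
    fix z
    have a: "lik Q J h z \<ge> 0" "lik Q J h' z \<ge> 0" by (rule lik_nonneg)+
    have "lik Q J h z * (if lik Q J h z \<le> lik Q J h' z then 1 else 0) \<le> sqrt (lik Q J h z * lik Q J h' z)"
    proof (cases "lik Q J h z \<le> lik Q J h' z")
      case True
      have "lik Q J h z = sqrt (lik Q J h z * lik Q J h z)" using a by simp
      also have "\<dots> \<le> sqrt (lik Q J h z * lik Q J h' z)" using a True
        by (intro real_sqrt_le_mono mult_left_mono) auto
      finally show ?thesis using True by simp
    qed (use a in simp)
    also have "\<dots> = (\<Prod>i\<in>J. sqrt (pmf (Q (h i)) (z i) * pmf (Q (h' i)) (z i)))"
      unfolding lik_def by (simp add: prod.distrib[symmetric] sqrt_prod)
    finally show "lik Q J h z * (if lik Q J h z \<le> lik Q J h' z then 1 else 0) \<le> \<dots>" .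
  qed
  also have "\<dots> = (\<Prod>i\<in>J. \<Sum>y\<in>UNIV. sqrt (pmf (Q (h i)) y * pmf (Q (h' i)) y))"
    using J by (rule sum_prod_UNIV)
  finally show ?thesis .
qed

lemma chernoff_bound:
  fixes Q :: "'x \<Rightarrow> 'y::finite pmf"
  assumes J: "finite J" and s: "0 < s" "s < 1"
  shows "(\<Sum>z\<in>PiE J (\<lambda>_. UNIV). lik Q J h z * (if lik Q J h z < exp T * lik Q J (\<lambda>_. star) z then 1 else 0))
         \<le> exp (s * T) * (\<Prod>i\<in>J. \<Sum>y\<in>UNIV. pmf (Q (h i)) y powr (1 - s) * pmf (Q star) y powr s)"
proof -
  have "(\<Sum>z\<in>PiE J (\<lambda>_. UNIV). lik Q J h z * (if lik Q J h z < exp T * lik Q J (\<lambda>_. star) z then 1 else 0))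
       \<le> (\<Sum>z\<in>PiE J (\<lambda>_. UNIV). exp (s * T) * (\<Prod>i\<in>J. pmf (Q (h i)) (z i) powr (1 - s) * pmf (Q star) (z i) powr s))"
  proof (rule sum_mono)
    fix z
    define a where "a = lik Q J h z"
    define b where "b = lik Q J (\<lambda>_. star) z"
    have a: "a \<ge> 0" "b \<ge> 0" unfolding a_def b_def by (rule lik_nonneg)+
    have "a * (if a < exp T * b then 1 else 0) \<le> a powr (1 - s) * (exp T * b) powr s"
    proof (cases "a < exp T * b \<and> a > 0")
      case True
      have "a = a powr (1 - s) * a powr s" using True by (simp add: powr_add[symmetric])
      also have "\<dots> \<le> a powr (1 - s) * (exp T * b) powr s" using True s
        by (intro mult_left_mono powr_mono2) auto
      finally show ?thesis using True by simp
    next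
      case False
      then show ?thesis using a by auto
    qed
    also have "\<dots> = exp (s * T) * (a powr (1 - s) * b powr s)"
      by (simp add: powr_mult exp_powr_real mult_ac)
    also have "a powr (1 - s) * b powr s = (\<Prod>i\<in>J. pmf (Q (h i)) (z i) powr (1 - s) * pmf (Q star) (z i) powr s)"
      unfolding a_def b_def lik_def by (simp add: prod_powr_distrib prod.distrib)
    finally show "lik Q J h z * (if lik Q J h z < exp T * lik Q J (\<lambda>_. star) z then 1 else 0) \<le>
       exp (s * T) * (\<Prod>i\<in>J. pmf (Q (h i)) (z i) powr (1 - s) * pmf (Q star) (z i) powr s)"
      unfolding a_def b_def .
  qed
  also have "\<dots> = exp (s * T) * (\<Prod>i\<in>J. \<Sum>y\<in>UNIV. pmf (Q (h i)) y powr (1 - s) * pmf (Q star) y powr s)"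
    using sum_prod_UNIV[OF J, of "\<lambda>i y. pmf (Q (h i)) y powr (1 - s) * pmf (Q star) y powr s"]
    by (simp add: sum_distrib_left[symmetric])
  finally show ?thesis .
qed



lemma sum_pmf_UNIV: "(\<Sum>y\<in>(UNIV::'y::finite set). pmf p y) = 1"
  by (rule sum_pmf_eq_1) auto

lemma markov_far:
  fixes Q :: "'x \<Rightarrow> 'y::finite pmf"
  assumes J: "finite J" and W: "W \<subseteq> J" and hW: "\<And>i. i \<in> W \<Longrightarrow> h i = star"
    and h'W: "\<And>i. i \<in> J - W \<Longrightarrow> h' i = star"
  shows "(\<Sum>z\<in>PiE J (\<lambda>_. UNIV). lik Q J h z *
            (if exp T * lik Q J (\<lambda>_. star) z \<le> lik Q J h' z \<and> lik Q J h' z > 0 then 1 else 0))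
         \<le> exp (- T)"
proof -
  define g where "g i y = (if i \<in> W then pmf (Q star) y * (pmf (Q (h' i)) y / pmf (Q star) y)
                           else pmf (Q (h i)) y)" for i y
  have "(\<Sum>z\<in>PiE J (\<lambda>_. UNIV). lik Q J h z *
            (if exp T * lik Q J (\<lambda>_. star) z \<le> lik Q J h' z \<and> lik Q J h' z > 0 then 1 else 0))
       \<le> (\<Sum>z\<in>PiE J (\<lambda>_. UNIV). exp (- T) * (\<Prod>i\<in>J. g i (z i)))"
  proof (rule sum_mono)
    fix z
    define S where "S = (\<Prod>i\<in>W. pmf (Q star) (z i))"
    define A' where "A' = (\<Prod>i\<in>W. pmf (Q (h' i)) (z i))"
    define R where "R = (\<Prod>i\<in>J - W. pmf (Q star) (z i))"
    define U where "U = (\<Prod>i\<in>J - W. pmf (Q (h i)) (z i))"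
    have split: "prod f J = prod f (J - W) * prod f W" for f :: "nat \<Rightarrow> real"
      using J W by (metis prod.subset_diff)
    have l0: "lik Q J (\<lambda>_. star) z = R * S" unfolding lik_def R_def S_def by (rule split)
    have lh: "lik Q J h z = U * S" unfolding lik_def U_def S_def split
      using hW by (simp cong: prod.cong)
    have lh': "lik Q J h' z = R * A'" unfolding lik_def R_def A'_def split
      using h'W by (metis (no_types, lifting) prod.cong)
    have pos: "S \<ge> 0" "U \<ge> 0" "R \<ge> 0" "A' \<ge> 0" unfolding S_def U_def R_def A'_def
      by (simp_all add: prod_nonneg)
    have pg: "(\<Prod>i\<in>J. g i (z i)) = U * (\<Prod>i\<in>W. pmf (Q star) (z i) * (pmf (Q (h' i)) (z i) / pmf (Q star) (z i)))"
      unfolding split U_def g_def by (auto intro!: prod.cong arg_cong2[where f="(*)"])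
    show "lik Q J h z * (if exp T * lik Q J (\<lambda>_. star) z \<le> lik Q J h' z \<and> lik Q J h' z > 0 then 1 else 0)
          \<le> exp (- T) * (\<Prod>i\<in>J. g i (z i))"
    proof (cases "exp T * lik Q J (\<lambda>_. star) z \<le> lik Q J h' z \<and> lik Q J h' z > 0 \<and> S > 0")
      case True
      then have "R > 0" using lh' pos by (metis mult_eq_0_iff order_le_less zero_less_mult_iff)
      with True have e: "exp T * S \<le> A'" unfolding l0 lh' by (simp add: mult.commute[of R] mult.assoc)
      have "\<forall>i\<in>W. pmf (Q star) (z i) \<noteq> 0" using True J W unfolding S_def
        by (metis infinite_super prod_zero_iff order_less_irrefl)
      then have "(\<Prod>i\<in>W. pmf (Q star) (z i) * (pmf (Q (h' i)) (z i) / pmf (Q star) (z i))) = A'"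
        unfolding A'_def by (intro prod.cong) auto
      then have "exp (- T) * (\<Prod>i\<in>J. g i (z i)) = U * (exp (-T) * A')" unfolding pg by simp
      moreover have "exp (-T) * A' \<ge> S" using e by (simp add: exp_minus field_simps)
      ultimately show ?thesis using True lh pos
        by (simp add: mult.left_commute[of "exp (-T)"] mult_left_mono)
    next
      case False
      have "0 \<le> (\<Prod>i\<in>J. g i (z i))" unfolding g_def by (intro prod_nonneg) auto
      moreover have "S = 0 \<or> \<not> (exp T * lik Q J (\<lambda>_. star) z \<le> lik Q J h' z \<and> lik Q J h' z > 0)"
        using False pos by auto
      ultimately show ?thesis using lh by auto
    qed
  qed
  also have "\<dots> = exp (- T) * (\<Prod>i\<in>J. \<Sum>y\<in>UNIV. g i y)"
    using sum_prod_UNIV[OF J, of g] by (simp add: sum_distrib_left[symmetric])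
  also have "\<dots> \<le> exp (- T) * 1"
  proof (intro mult_left_mono prod_le_1 conjI)
    fix i assume "i \<in> J"
    show "0 \<le> (\<Sum>y\<in>UNIV. g i y)" unfolding g_def by (intro sum_nonneg) auto
    have "(\<Sum>y\<in>UNIV. g i y) \<le> (\<Sum>y\<in>UNIV. pmf (Q (if i \<in> W then h' i else h i)) y)"
      unfolding g_def by (intro sum_mono) auto
    then show "(\<Sum>y\<in>UNIV. g i y) \<le> 1" by (simp add: sum_pmf_UNIV)
  qed auto
  finally show ?thesis by simp
qed



definition hyp :: "'x \<Rightarrow> nat \<Rightarrow> (nat \<Rightarrow> 'x) \<Rightarrow> nat \<Rightarrow> nat \<Rightarrow> 'x" where
  "hyp star N c t i = (if t \<le> i \<and> i < t + N then c (i - t) else star)"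

definition best :: "('x \<Rightarrow> 'y pmf) \<Rightarrow> 'x \<Rightarrow> nat \<Rightarrow> nat \<Rightarrow> nat \<Rightarrow> (nat \<Rightarrow> nat \<Rightarrow> 'x) \<Rightarrow> (nat \<Rightarrow> 'y) \<Rightarrow> nat \<times> nat" where
  "best Q star N A M cw y = (SOME p. p \<in> {1..A} \<times> {..<M} \<and>
     (\<forall>q\<in>{1..A} \<times> {..<M}. lik Q {1..<A+N} (hyp star N (cw (snd q)) (fst q)) y
                          \<le> lik Q {1..<A+N} (hyp star N (cw (snd p)) (fst p)) y))"

definition mldec :: "('x \<Rightarrow> 'y pmf) \<Rightarrow> 'x \<Rightarrow> nat \<Rightarrow> nat \<Rightarrow> nat \<Rightarrow> (nat \<Rightarrow> nat \<Rightarrow> 'x) \<Rightarrow> ((nat \<Rightarrow> 'y) \<Rightarrow> nat) \<times> ((nat \<Rightarrow> 'y) \<Rightarrow> nat)" where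
  "mldec Q star N A M cw = (\<lambda>y. A + N, \<lambda>y. snd (best Q star N A M cw y))"

lemma lik_cong: "(\<And>i. i \<in> J \<Longrightarrow> y i = y' i) \<Longrightarrow> lik Q J h y = lik Q J h y'"
  unfolding lik_def by (intro prod.cong) auto

lemma best_cong: "(\<And>i. i \<in> {1..<A+N} \<Longrightarrow> y i = y' i) \<Longrightarrow> best Q star N A M cw y = best Q star N A M cw y'"
proof -
  assume a: "\<And>i. i \<in> {1..<A+N} \<Longrightarrow> y i = y' i"
  have "\<And>h. lik Q {1..<A+N} h y = lik Q {1..<A+N} h y'" by (rule lik_cong) (rule a)
  then show ?thesis unfolding best_def by simp
qed

lemma valid_mldec: "valid_decoder (mldec Q star N A M cw)"
  unfolding valid_decoder_def mldec_def
  by (auto intro!: arg_cong[where f=snd] best_cong)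

lemma best_spec:
  assumes "A \<ge> 1" "M \<ge> 1"
  shows "best Q star N A M cw y \<in> {1..A} \<times> {..<M} \<and>
     (\<forall>q\<in>{1..A} \<times> {..<M}. lik Q {1..<A+N} (hyp star N (cw (snd q)) (fst q)) y
                          \<le> lik Q {1..<A+N} (hyp star N (cw (snd (best Q star N A M cw y))) (fst (best Q star N A M cw y))) y)"
proof -
  let ?S = "{1..A} \<times> {..<M}"
  let ?f = "\<lambda>p. lik Q {1..<A+N} (hyp star N (cw (snd p)) (fst p)) y"
  have "(1, 0) \<in> ?S" using assms by auto
  then have fin: "finite ?S" and ne: "?S \<noteq> {}" by auto
  have "Max (?f ` ?S) \<in> ?f ` ?S" using fin ne by (intro Max_in) auto
  then obtain p where p: "p \<in> ?S" "?f p = Max (?f ` ?S)" by auto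
  have "\<forall>q\<in>?S. ?f q \<le> ?f p" using fin p by auto
  with p(1) have "\<exists>p. p \<in> ?S \<and> (\<forall>q\<in>?S. ?f q \<le> ?f p)" by blast
  then show ?thesis unfolding best_def by (rule someI_ex)
qed



lemma out_measure_hyp: "out_measure Q star N c l = PiM UNIV (\<lambda>i. measure_pmf (Q (hyp star N c l i)))"
  unfolding out_measure_def hyp_def by (simp add: if_distrib)

lemma prod_if_card:
  fixes B :: real
  assumes "finite J"
  shows "(\<Prod>i\<in>J. if P i then 1 else B) = B ^ card {i\<in>J. \<not> P i}"
proof -
  have "(\<Prod>i\<in>J. if P i then 1 else B) = (\<Prod>i\<in>{i\<in>J. \<not> P i}. B)"
    using assms by (intro prod.mono_neutral_cong_right) auto
  then show ?thesis by simp
qed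

lemma error_bound:
  fixes Q :: "'x \<Rightarrow> 'y::finite pmf" and cw :: "nat \<Rightarrow> nat \<Rightarrow> 'x"
  assumes A: "A \<ge> 1" and M: "M \<ge> 1" and m: "m < M" and l: "l \<in> {1..A}"
    and alph: "\<And>m j. cw m j = xs \<or> cw m j = star"
    and pre: "\<And>m j. m < M \<Longrightarrow> j < K \<Longrightarrow> cw m j = xs" and KN: "K \<le> N"
    and dist: "\<And>m m' t t'. m < M \<Longrightarrow> m' < M \<Longrightarrow> m \<noteq> m' \<Longrightarrow> t < t' + N \<Longrightarrow> t' < t + N \<Longrightarrow>
                 d \<le> card {i. hyp star N (cw m) t i \<noteq> hyp star N (cw m') t' i}"
    and s: "0 < s" "s < 1"
    and phi: "(\<Sum>y\<in>UNIV. pmf (Q xs) y powr (1 - s) * pmf (Q star) y powr s) \<le> 1"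
    and B: "(\<Sum>y\<in>UNIV. sqrt (pmf (Q xs) y * pmf (Q star) y)) \<le> 1"
  shows "measure (out_measure Q star N (cw m) l) {y. snd (mldec Q star N A M cw) y \<noteq> m}
    \<le> exp (s * T) * (\<Sum>y\<in>UNIV. pmf (Q xs) y powr (1 - s) * pmf (Q star) y powr s) ^ K
       + real A * real M * exp (- T)
       + 2 * real N * real M * (\<Sum>y\<in>UNIV. sqrt (pmf (Q xs) y * pmf (Q star) y)) ^ d"
proof -
  define \<phi> where "\<phi> = (\<Sum>y\<in>UNIV. pmf (Q xs) y powr (1 - s) * pmf (Q star) y powr s)"
  define \<beta> where "\<beta> = (\<Sum>y\<in>UNIV. sqrt (pmf (Q xs) y * pmf (Q star) y))"
  define J where "J = {1..<A+N}"
  define h where "h = hyp star N (cw m) l"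
  define H where "H p = hyp star N (cw (snd p)) (fst p)" for p :: "nat \<times> nat"
  define cand where "cand = {1..A} \<times> {..<M}"
  define E where "E = {y. snd (mldec Q star N A M cw) y \<noteq> m}"
  define far where "far p \<longleftrightarrow> fst p + N \<le> l \<or> l + N \<le> fst p" for p :: "nat \<times> nat"
  define Far where "Far = {p\<in>cand. far p}"
  define Near where "Near = {p\<in>cand. snd p \<noteq> m \<and> \<not> far p}"
  define L where "L g z = lik Q J g z" for g z
  define c0 where "c0 z = L h z * (if L h z < exp T * L (\<lambda>_. star) z then 1 else 0)" for z
  define cf where "cf p z = L h z * (if exp T * L (\<lambda>_. star) z \<le> L (H p) z \<and> L (H p) z > 0 then 1 else 0)" for p z
  define cn where "cn p z = L h z * (if L h z \<le> L (H p) z then 1 else 0)" for p z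
  have finJ: "finite J" unfolding J_def by simp
  have fincand: "finite cand" unfolding cand_def by simp
  have Lnn: "L g z \<ge> 0" for g z unfolding L_def by (rule lik_nonneg)
  have c0nn: "c0 z \<ge> 0" for z unfolding c0_def using Lnn by simp
  have cfnn: "cf p z \<ge> 0" for p z unfolding cf_def using Lnn by simp
  have cnnn: "cn p z \<ge> 0" for p z unfolding cn_def using Lnn by simp
  have Hlm: "H (l, m) = h" unfolding H_def h_def by simp
  have lmc: "(l, m) \<in> cand" unfolding cand_def using l m by auto
  have depE: "y \<in> E \<longleftrightarrow> y' \<in> E" if "\<forall>i\<in>J. y i = y' i" for y y'
    unfolding E_def mldec_def using best_cong[of A N y y' Q star M cw] that unfolding J_def by auto
  have "measure (out_measure Q star N (cw m) l) E = (\<Sum>z\<in>PiE J (\<lambda>_. UNIV) \<inter> E. L h z)"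
    unfolding out_measure_hyp L_def lik_def h_def using finJ depE by (rule prob_cyl)
  also have "\<dots> = (\<Sum>z\<in>PiE J (\<lambda>_. UNIV). L h z * (if z \<in> E then 1 else 0))"
  proof -
    have "finite (PiE J (\<lambda>_. UNIV::'y set))" using finJ by (simp add: finite_PiE)
    then show ?thesis by (simp add: sum.inter_restrict if_distrib cong: if_cong)
  qed
  finally have step1: "measure (out_measure Q star N (cw m) l) E = \<dots>" .
  have pw: "L h z * (if z \<in> E then 1 else 0) \<le> c0 z + (\<Sum>p\<in>Far. cf p z) + (\<Sum>p\<in>Near. cn p z)" for z
  proof (cases "z \<in> E \<and> L h z > 0")
    case False
    have "0 \<le> c0 z + (\<Sum>p\<in>Far. cf p z) + (\<Sum>p\<in>Near. cn p z)"
      using c0nn cfnn cnnn by (intro add_nonneg_nonneg sum_nonneg) auto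
    moreover have "L h z * (if z \<in> E then 1 else 0) = 0" using False Lnn[of h z] by auto
    ultimately show ?thesis by linarith
  next
    case True
    define p where "p = best Q star N A M cw z"
    have bs: "p \<in> cand" "\<forall>q\<in>cand. L (H q) z \<le> L (H p) z"
      using best_spec[OF A M, of Q star N cw z] unfolding p_def cand_def L_def H_def J_def by auto
    have le: "L h z \<le> L (H p) z" using bs(2) lmc Hlm by metis
    have pm: "snd p \<noteq> m" using True unfolding E_def mldec_def p_def by simp
    have sF: "(\<Sum>p\<in>Far. cf p z) \<ge> 0" "(\<Sum>p\<in>Near. cn p z) \<ge> 0"
      using cfnn cnnn by (auto intro: sum_nonneg)
    have finF: "finite Far" "finite Near" unfolding Far_def Near_def using fincand by auto
    show ?thesis
    proof (cases "far p")
      case True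
      show ?thesis
      proof (cases "L h z < exp T * L (\<lambda>_. star) z")
        case True
        then have "c0 z = L h z" unfolding c0_def by simp
        then show ?thesis using sF \<open>z \<in> E \<and> L h z > 0\<close> by simp
      next
        case False
        then have "cf p z = L h z" unfolding cf_def using le \<open>z \<in> E \<and> L h z > 0\<close> by auto
        moreover have "cf p z \<le> (\<Sum>p\<in>Far. cf p z)"
          using finF \<open>far p\<close> bs(1) cfnn unfolding Far_def by (intro member_le_sum) auto
        ultimately show ?thesis using sF c0nn[of z] \<open>z \<in> E \<and> L h z > 0\<close> by simp
      qed
    next
      case False
      then have "cn p z = L h z" unfolding cn_def using le by auto
      moreover have "cn p z \<le> (\<Sum>p\<in>Near. cn p z)"
        using finF False bs(1) pm cnnn unfolding Near_def by (intro member_le_sum) auto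
      ultimately show ?thesis using sF c0nn[of z] \<open>z \<in> E \<and> L h z > 0\<close> by simp
    qed
  qed
  define Z where "Z = PiE J (\<lambda>_. UNIV :: 'y set)"
  have finZ: "finite Z" unfolding Z_def using finJ by (simp add: finite_PiE)
  have hval: "h i = xs \<or> h i = star" for i unfolding h_def hyp_def using alph by auto
  have Hval: "H p i = xs \<or> H p i = star" for p i unfolding H_def hyp_def using alph by auto
  have phinn: "\<phi> \<ge> 0" unfolding \<phi>_def by (intro sum_nonneg) auto
  have Fstar: "(\<Sum>y\<in>UNIV. pmf (Q star) y powr (1 - s) * pmf (Q star) y powr s) = 1"
    by (simp add: powr_add[symmetric] sum_pmf_UNIV)
  have sa: "(\<Sum>z\<in>Z. c0 z) \<le> exp (s * T) * \<phi> ^ K"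
  proof -
    define F where "F a = (\<Sum>y\<in>UNIV. pmf (Q a) y powr (1 - s) * pmf (Q star) y powr s)" for a
    have "(\<Sum>z\<in>Z. c0 z) \<le> exp (s * T) * (\<Prod>i\<in>J. F (h i))"
      unfolding Z_def c0_def L_def F_def using chernoff_bound[OF finJ s, of Q h T star] by simp
    also have "(\<Prod>i\<in>J. F (h i)) \<le> \<phi> ^ K"
    proof -
      define P where "P = {l..<l+K}"
      have PJ: "P \<subseteq> J" unfolding P_def J_def using l KN by auto
      have Fh: "F (h i) = (if h i = xs then \<phi> else 1)" for i
        using hval[of i] Fstar unfolding F_def \<phi>_def by auto
      have hP: "h i = xs" if "i \<in> P" for i
        using that pre[OF m, of "i - l"] KN unfolding P_def h_def hyp_def by auto
      have "(\<Prod>i\<in>J. F (h i)) = (\<Prod>i\<in>J - P. F (h i)) * (\<Prod>i\<in>P. F (h i))"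
        using PJ finJ by (metis prod.subset_diff)
      also have "(\<Prod>i\<in>P. F (h i)) = \<phi> ^ K" using hP Fh unfolding P_def
        by (simp add: F_def \<phi>_def)
      also have "(\<Prod>i\<in>J - P. F (h i)) * \<phi> ^ K \<le> 1 * \<phi> ^ K"
      proof (rule mult_right_mono)
        show "(\<Prod>i\<in>J - P. F (h i)) \<le> 1"
          using Fh phi phinn unfolding \<phi>_def[symmetric] by (intro prod_le_1) auto
      qed (use phinn in simp)
      finally show ?thesis by simp
    qed
    then have "exp (s * T) * (\<Prod>i\<in>J. F (h i)) \<le> exp (s * T) * \<phi> ^ K" by simp
    finally show ?thesis .
  qed
  have sb: "(\<Sum>z\<in>Z. cf p z) \<le> exp (- T)" if "p \<in> Far" for p
  proof -
    define W where "W = {fst p..<fst p + N}"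
    have p: "fst p \<in> {1..A}" "far p" using that unfolding Far_def cand_def by auto
    have WJ: "W \<subseteq> J" unfolding W_def J_def using p by auto
    have hW: "h i = star" if "i \<in> W" for i
      using that p(2) unfolding W_def h_def hyp_def far_def by auto
    have HW: "H p i = star" if "i \<in> J - W" for i
      using that unfolding W_def H_def hyp_def by auto
    show ?thesis unfolding Z_def cf_def L_def
      using markov_far[OF finJ WJ hW HW, where T=T and Q=Q] by simp
  qed
  have \<beta>nn: "\<beta> \<ge> 0" unfolding \<beta>_def by (intro sum_nonneg) auto
  have sc: "(\<Sum>z\<in>Z. cn p z) \<le> \<beta> ^ d" if "p \<in> Near" for p
  proof -
    define G where "G a b = (\<Sum>y\<in>UNIV. sqrt (pmf (Q a) y * pmf (Q b) y))" for a b
    have p: "fst p \<in> {1..A}" "snd p < M" "snd p \<noteq> m" "\<not> far p" using that unfolding Near_def cand_def by auto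
    have Gaa: "G a a = 1" for a unfolding G_def by (simp add: sum_pmf_UNIV)
    have Gab: "G (h i) (H p i) = (if h i = H p i then 1 else \<beta>)" for i
      using hval[of i] Hval[of p i] Gaa unfolding G_def \<beta>_def by (auto simp: mult.commute)
    have "(\<Sum>z\<in>Z. cn p z) \<le> (\<Prod>i\<in>J. G (h i) (H p i))"
      unfolding Z_def cn_def L_def G_def using bhatt_bound[OF finJ, of Q h "H p"] by simp
    also have "\<dots> = \<beta> ^ card {i\<in>J. h i \<noteq> H p i}"
      unfolding Gab using prod_if_card[OF finJ, of "\<lambda>i. h i = H p i" \<beta>] by simp
    also have "{i\<in>J. h i \<noteq> H p i} = {i. h i \<noteq> H p i}"
      using p(1) l unfolding J_def h_def H_def hyp_def by auto
    also have "\<beta> ^ card {i. h i \<noteq> H p i} \<le> \<beta> ^ d"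
    proof (rule power_decreasing)
      show "d \<le> card {i. h i \<noteq> H p i}" unfolding h_def H_def
        using dist[OF m p(2) p(3)[symmetric]] p(4) unfolding far_def by auto
    qed (use \<beta>nn B \<beta>_def in auto)
    finally show ?thesis .
  qed
  have cardFar: "card Far \<le> A * M"
  proof -
    have "card Far \<le> card cand" unfolding Far_def using fincand by (intro card_mono) auto
    then show ?thesis unfolding cand_def by (simp add: card_cartesian_product)
  qed
  have cardNear: "card Near \<le> 2 * N * M"
  proof -
    have "Near \<subseteq> {(l + 1) - N..<l + N} \<times> {..<M}" unfolding Near_def cand_def far_def by auto
    then have "card Near \<le> card ({(l + 1) - N..<l + N} \<times> {..<M})" by (intro card_mono) auto
    also have "\<dots> \<le> 2 * N * M" by (simp add: card_cartesian_product) linarith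
    finally show ?thesis .
  qed
  have "measure (out_measure Q star N (cw m) l) E \<le> (\<Sum>z\<in>Z. c0 z + (\<Sum>p\<in>Far. cf p z) + (\<Sum>p\<in>Near. cn p z))"
    unfolding step1 Z_def[symmetric] by (intro sum_mono pw)
  also have "\<dots> = (\<Sum>z\<in>Z. c0 z) + (\<Sum>p\<in>Far. \<Sum>z\<in>Z. cf p z) + (\<Sum>p\<in>Near. \<Sum>z\<in>Z. cn p z)"
    by (simp add: sum.distrib sum.swap[of _ Z])
  also have "\<dots> \<le> exp (s * T) * \<phi> ^ K + (\<Sum>p\<in>Far. exp (- T)) + (\<Sum>p\<in>Near. \<beta> ^ d)"
    using sa sb sc by (intro add_mono sum_mono) auto
  also have "(\<Sum>p\<in>Far. exp (- T)) \<le> real A * real M * exp (- T)"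
    using cardFar by (simp add: mult_right_mono flip: of_nat_mult)
  also have "(\<Sum>p\<in>Near. \<beta> ^ d) \<le> 2 * real N * real M * \<beta> ^ d"
  proof -
    have "(\<Sum>p\<in>Near. \<beta> ^ d) = real (card Near) * \<beta> ^ d" by simp
    also have "\<dots> \<le> real (2 * N * M) * \<beta> ^ d" using \<beta>nn
      by (intro mult_right_mono) (use cardNear in \<open>simp only: of_nat_le_iff\<close>, simp)
    finally show ?thesis by simp
  qed
  finally show ?thesis unfolding E_def \<phi>_def \<beta>_def by simp
qed



definition cws :: "'x \<Rightarrow> 'x \<Rightarrow> nat \<Rightarrow> nat set \<Rightarrow> nat \<Rightarrow> 'x" where
  "cws xs star K S j = (if j < K then xs else if j - K \<in> S then xs else star)"

lemma diff_shift:
  "card {i. hyp star N c (t+k) i \<noteq> hyp star N c' (t'+k) i} = card {i. hyp star N c t i \<noteq> hyp star N c' t' i}"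
proof -
  have "{i. hyp star N c (t+k) i \<noteq> hyp star N c' (t'+k) i} = (\<lambda>i. i + k) ` {i. hyp star N c t i \<noteq> hyp star N c' t' i}"
  proof (intro set_eqI iffI)
    fix i assume "i \<in> {i. hyp star N c (t+k) i \<noteq> hyp star N c' (t'+k) i}"
    then have "k \<le> i" "hyp star N c t (i - k) \<noteq> hyp star N c' t' (i - k)"
      unfolding hyp_def by (auto split: if_splits simp: algebra_simps)
    then show "i \<in> (\<lambda>i. i + k) ` {i. hyp star N c t i \<noteq> hyp star N c' t' i}"
      by (intro image_eqI[of _ _ "i - k"]) auto
  qed (auto simp: hyp_def split: if_splits)
  then show ?thesis by (simp add: card_image)
qed

lemma diff_finite: "finite {i. hyp star N c t i \<noteq> hyp star N c' t' i}"
  by (rule finite_subset[of _ "{..<t+N} \<union> {..<t'+N}"]) (auto simp: hyp_def)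

lemma diff_sym: "{i. hyp star N c t i \<noteq> hyp star N c' t' i} = {i. hyp star N c' t' i \<noteq> hyp star N c t i}"
  by auto

lemma diff_norm:
  assumes "t < t' + N"
  shows "card {i. hyp star N c t i \<noteq> hyp star N c' t' i} = card {i. hyp star N c N i \<noteq> hyp star N c' (N + t' - t) i}"
proof -
  have "card {i. hyp star N c t i \<noteq> hyp star N c' t' i} = card {i. hyp star N c (t+N) i \<noteq> hyp star N c' (t'+N) i}"
    by (rule diff_shift[symmetric])
  also have "\<dots> = card {i. hyp star N c (N+t) i \<noteq> hyp star N c' ((N + t' - t)+t) i}"
    using assms by (simp add: add.commute)
  also have "\<dots> = card {i. hyp star N c N i \<noteq> hyp star N c' (N + t' - t) i}"
    by (rule diff_shift)
  finally show ?thesis .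
qed

lemma count_close:
  fixes W :: "nat set" assumes W: "W \<subseteq> {..<n}"
  shows "real (card {S\<in>Pow {..<n}. card (S - W \<union> (W - S)) < d}) \<le> 2 ^ d * (3/2) ^ n"
proof -
  let ?A = "{..<n}"
  let ?f = "\<lambda>U. U - W \<union> (W - U)"
  have "{S\<in>Pow ?A. card (?f S) < d} \<subseteq> ?f ` {U\<in>Pow ?A. card U < d}"
  proof
    fix S assume S: "S \<in> {S\<in>Pow ?A. card (?f S) < d}"
    have "S = ?f (?f S)" by auto
    moreover have "?f S \<in> {U\<in>Pow ?A. card U < d}" using S W by auto
    ultimately show "S \<in> ?f ` {U\<in>Pow ?A. card U < d}" by blast
  qed
  then have "card {S\<in>Pow ?A. card (?f S) < d} \<le> card (?f ` {U\<in>Pow ?A. card U < d})"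
    by (intro card_mono) auto
  also have "\<dots> \<le> card {U\<in>Pow ?A. card U < d}" by (rule card_image_le) auto
  finally have c1: "real (card {S\<in>Pow ?A. card (?f S) < d}) \<le> real (card {U\<in>Pow ?A. card U < d})"
    by simp
  have "real (card {U\<in>Pow ?A. card U < d}) = (\<Sum>U\<in>Pow ?A. if card U < d then 1 else 0)"
    by (simp add: sum.If_cases Int_def)
  also have "\<dots> \<le> (\<Sum>U\<in>Pow ?A. 2 ^ d * ((\<Prod>x\<in>U. 1/2) * (\<Prod>x\<in>?A - U. 1)))"
  proof (rule sum_mono)
    fix U assume "U \<in> Pow ?A"
    have "(1::real) \<le> 2 ^ d * (1/2) ^ card U" if "card U < d"
    proof -
      have "(2::real) ^ card U \<le> 2 ^ d" using that by (intro power_increasing) auto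
      then show ?thesis by (simp add: field_simps power_divide)
    qed
    then show "(if card U < d then 1 else 0) \<le> 2 ^ d * ((\<Prod>x\<in>U. 1/2) * (\<Prod>x\<in>?A - U. 1::real))"
      by auto
  qed
  also have "\<dots> = 2 ^ d * (\<Prod>x\<in>?A. 1/2 + 1)"
    by (subst prod_add) (simp_all add: sum_distrib_left del: prod_constant)
  also have "\<dots> = 2 ^ d * (3/2) ^ n" by simp
  finally show ?thesis using c1 by linarith
qed



lemma dist_ge_data:
  assumes xs: "xs \<noteq> star" and N: "N = K + n" and S: "S \<subseteq> {..<n}"
    and hv: "\<And>i. h' i = xs \<or> h' i = star"
    and fin: "finite {i. hyp star N (cws xs star K S) N i \<noteq> h' i}"
  shows "card (S - {j\<in>{..<n}. h' (N+K+j) = xs} \<union> ({j\<in>{..<n}. h' (N+K+j) = xs} - S))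
         \<le> card {i. hyp star N (cws xs star K S) N i \<noteq> h' i}"
proof (rule card_inj_on_le[where f="\<lambda>j. N + K + j"])
  show "inj_on (\<lambda>j. N + K + j) (S - {j\<in>{..<n}. h' (N+K+j) = xs} \<union> ({j\<in>{..<n}. h' (N+K+j) = xs} - S))"
    by (auto simp: inj_on_def)
  show "(\<lambda>j. N + K + j) ` (S - {j\<in>{..<n}. h' (N+K+j) = xs} \<union> ({j\<in>{..<n}. h' (N+K+j) = xs} - S))
        \<subseteq> {i. hyp star N (cws xs star K S) N i \<noteq> h' i}"
  proof
    fix i assume "i \<in> (\<lambda>j. N + K + j) ` (S - {j\<in>{..<n}. h' (N+K+j) = xs} \<union> ({j\<in>{..<n}. h' (N+K+j) = xs} - S))"
    then obtain j where j: "i = N + K + j" "j < n" "(j \<in> S) \<noteq> (h' (N+K+j) = xs)" using S by auto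
    have "hyp star N (cws xs star K S) N i = (if j \<in> S then xs else star)"
      using j N unfolding hyp_def cws_def by auto
    then show "i \<in> {i. hyp star N (cws xs star K S) N i \<noteq> h' i}"
      using j hv[of i] xs by auto
  qed
qed (rule fin)

definition goodc :: "'x \<Rightarrow> 'x \<Rightarrow> nat \<Rightarrow> nat \<Rightarrow> nat \<Rightarrow> nat \<Rightarrow> (nat \<Rightarrow> nat set) \<Rightarrow> nat \<Rightarrow> bool" where
  "goodc xs star K N n d D k \<longleftrightarrow> (\<forall>a<k. D a \<subseteq> {..<n}) \<and>
     (\<forall>a<k. \<forall>b<k. a \<noteq> b \<longrightarrow> (\<forall>t'\<in>{1..<2*N}.
        d \<le> card {i. hyp star N (cws xs star K (D a)) N i \<noteq> hyp star N (cws xs star K (D b)) t' i}))"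

lemma greedy:
  assumes xs: "xs \<noteq> star" and N: "N = K + n" and N1: "N \<ge> 1"
    and cnt: "real M * (2 * real N) * 2 ^ d * (3/2) ^ n < 2 ^ n"
  shows "\<exists>D. goodc xs star K N n d D M"
proof -
  have "\<exists>D. goodc xs star K N n d D k" if "k \<le> M" for k
    using that
  proof (induction k)
    case 0
    show ?case by (auto simp: goodc_def)
  next
    case (Suc k)
    then obtain D where D: "goodc xs star K N n d D k" by auto
    let ?dd = "\<lambda>S t S' t'. card {i. hyp star N (cws xs star K S) t i \<noteq> hyp star N (cws xs star K S') t' i}"
    define W where "W b t' = {j\<in>{..<n}. hyp star N (cws xs star K (D b)) t' (N+K+j) = xs}" for b t'
    define Bad where "Bad = (\<Union>b\<in>{..<k}. \<Union>t'\<in>{1..<2*N}. {S\<in>Pow {..<n}. card (S - W b t' \<union> (W b t' - S)) < d})"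
    have cB: "card Bad \<le> (\<Sum>b\<in>{..<k}. \<Sum>t'\<in>{1..<2*N}. card {S\<in>Pow {..<n}. card (S - W b t' \<union> (W b t' - S)) < d})"
      unfolding Bad_def by (rule order.trans[OF card_UN_le]) (auto intro!: sum_mono card_UN_le)
    have "real (card Bad) \<le> (\<Sum>b\<in>{..<k}. \<Sum>t'\<in>{1..<2*N}. real (card {S\<in>Pow {..<n}. card (S - W b t' \<union> (W b t' - S)) < d}))"
      using cB by (simp only: of_nat_sum[symmetric] of_nat_le_iff)
    also have "\<dots> \<le> (\<Sum>b\<in>{..<k}. \<Sum>t'\<in>{1..<2*N}. 2 ^ d * (3/2) ^ n)"
      by (intro sum_mono count_close) (auto simp: W_def)
    also have "\<dots> = real k * (real (2 * N - 1)) * 2 ^ d * (3/2) ^ n" by simp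
    also have "\<dots> \<le> real M * (2 * real N) * 2 ^ d * (3/2) ^ n"
      using Suc.prems by (intro mult_right_mono mult_mono) auto
    also have "\<dots> < 2 ^ n" by (rule cnt)
    also have "\<dots> = real (card (Pow {..<n::nat}))" by (simp add: card_Pow)
    finally have "card Bad < card (Pow {..<n::nat})" by linarith
    moreover have "finite Bad" unfolding Bad_def by auto
    ultimately have "\<not> Pow {..<n} \<subseteq> Bad" using card_mono by (metis leD)
    then obtain S where S: "S \<in> Pow {..<n}" "S \<notin> Bad" by blast
    define D' where "D' = D(k := S)"
    have fwd: "d \<le> ?dd S N (D b) t'" if "b < k" "t' \<in> {1..<2*N}" for b t'
    proof -
      have "card (S - W b t' \<union> (W b t' - S)) \<le> ?dd S N (D b) t'"
        unfolding W_def using xs N S(1)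
        by (intro dist_ge_data diff_finite) (auto simp: hyp_def cws_def)
      moreover have "\<not> card (S - W b t' \<union> (W b t' - S)) < d" using S that unfolding Bad_def by auto
      ultimately show ?thesis by linarith
    qed
    have bwd: "d \<le> ?dd (D b) N S t'" if "b < k" "t' \<in> {1..<2*N}" for b t'
    proof -
      have "?dd (D b) N S t' = ?dd S t' (D b) N" by (simp only: diff_sym)
      also have "\<dots> = ?dd S N (D b) (N + N - t')" using that by (intro diff_norm) auto
      moreover have "N + N - t' \<in> {1..<2*N}" using that by auto
      ultimately show ?thesis using fwd[OF that(1), of "N + N - t'"] by simp
    qed
    have "goodc xs star K N n d D' (Suc k)"
      unfolding goodc_def
    proof (intro conjI allI impI ballI)
      fix a assume "a < Suc k"
      then show "D' a \<subseteq> {..<n}" using D S unfolding goodc_def D'_def by (cases "a = k") auto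
    next
      fix a b t' assume ab: "a < Suc k" "b < Suc k" "a \<noteq> b" and t': "t' \<in> {1..<2*N}"
      show "d \<le> ?dd (D' a) N (D' b) t'"
      proof (cases "a = k")
        case True then show ?thesis using ab fwd[of b t'] t' unfolding D'_def by auto
      next
        case False
        show ?thesis
        proof (cases "b = k")
          case True then show ?thesis using ab False bwd[of a t'] t' unfolding D'_def by auto
        next
          case False2: False
          then show ?thesis using D ab False t' unfolding goodc_def D'_def by auto
        qed
      qed
    qed
    then show ?case by blast
  qed
  then show ?thesis by blast
qed



lemma sum_pmf_UNIV': "(\<Sum>y\<in>(UNIV::'y::finite set). pmf p y) = 1"
  by (rule sum_pmf_eq_1) auto

lemma kl_self: "kl_div p p = 0"
  unfolding kl_div_def by (simp add: sum.neutral)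

lemma ln_strict: "0 < (x::real) \<Longrightarrow> x \<noteq> 1 \<Longrightarrow> ln x < x - 1"
proof -
  assume a: "0 < x" "x \<noteq> 1"
  have "ln x \<le> x - 1" by (rule ln_le_minus_one[OF a(1)])
  moreover have "ln x \<noteq> x - 1" using a ln_eq_minus_one by blast
  ultimately show ?thesis by simp
qed

lemma gibbs:
  fixes p q :: "'y::finite pmf"
  assumes "p \<noteq> q"
  shows "kl_div p q > 0"
proof (cases "\<forall>y. pmf p y > 0 \<longrightarrow> pmf q y > 0")
  case False then show ?thesis unfolding kl_div_def by (simp only: if_False) simp
next
  case True
  define S where "S = {y. pmf p y > 0}"
  have fS: "finite S" by simp
  have eq: "(\<Sum>y\<in>UNIV. if pmf p y = 0 then 0 else pmf p y * ln (pmf p y / pmf q y))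
          = (\<Sum>y\<in>S. pmf p y * ln (pmf p y / pmf q y))"
    unfolding S_def by (rule sum.mono_neutral_cong_right) (auto simp: order_le_less pmf_nonneg)
  have "(\<Sum>y\<in>S. pmf p y - pmf q y) < (\<Sum>y\<in>S. pmf p y * ln (pmf p y / pmf q y))"
  proof (rule sum_strict_mono_ex1[OF fS])
    have trm: "pmf p y - pmf q y \<le> pmf p y * ln (pmf p y / pmf q y) \<and>
         (pmf p y \<noteq> pmf q y \<longrightarrow> pmf p y - pmf q y < pmf p y * ln (pmf p y / pmf q y))" if "y \<in> S" for y
    proof -
      have pp: "pmf p y > 0" "pmf q y > 0" using that True unfolding S_def by auto
      have l: "ln (pmf p y / pmf q y) = - ln (pmf q y / pmf p y)" using pp by (simp add: ln_div)
      have a: "ln (pmf q y / pmf p y) \<le> pmf q y / pmf p y - 1" using pp by (intro ln_le_minus_one) auto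
      have b: "pmf p y \<noteq> pmf q y \<Longrightarrow> ln (pmf q y / pmf p y) < pmf q y / pmf p y - 1"
        using pp by (intro ln_strict) auto
      have "pmf p y * (pmf q y / pmf p y - 1) = pmf q y - pmf p y" using pp by (simp add: field_simps)
      moreover have "pmf p y * ln (pmf q y / pmf p y) \<le> pmf p y * (pmf q y / pmf p y - 1)"
        using a pp by (intro mult_left_mono) auto
      moreover have "pmf p y \<noteq> pmf q y \<Longrightarrow> pmf p y * ln (pmf q y / pmf p y) < pmf p y * (pmf q y / pmf p y - 1)"
        using b pp by (intro mult_strict_left_mono) auto
      moreover have "pmf p y * - ln (pmf q y / pmf p y) = - (pmf p y * ln (pmf q y / pmf p y))" by simp
      ultimately show ?thesis unfolding l by linarith
    qed
    show "\<forall>y\<in>S. pmf p y - pmf q y \<le> pmf p y * ln (pmf p y / pmf q y)" using trm by blast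
    show "\<exists>y\<in>S. pmf p y - pmf q y < pmf p y * ln (pmf p y / pmf q y)"
    proof (rule ccontr)
      assume "\<not> ?thesis"
      then have eqS: "\<forall>y\<in>S. pmf q y = pmf p y" using trm by force
      have "(\<Sum>y\<in>UNIV. pmf q y) = (\<Sum>y\<in>S. pmf q y) + (\<Sum>y\<in>UNIV - S. pmf q y)"
        by (simp add: sum.subset_diff[of S UNIV])
      moreover have "(\<Sum>y\<in>S. pmf q y) = (\<Sum>y\<in>S. pmf p y)" using eqS by simp
      moreover have "(\<Sum>y\<in>S. pmf p y) = 1"
        using sum_pmf_UNIV'[of p] unfolding S_def
        by (subst (asm) sum.mono_neutral_cong_right[of UNIV "{y. pmf p y > 0}" "pmf p" "pmf p"])
           (auto simp: order_le_less pmf_nonneg)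
      ultimately have "(\<Sum>y\<in>UNIV - S. pmf q y) = 0" using sum_pmf_UNIV'[of q] by simp
      then have "\<forall>y\<in>UNIV - S. pmf q y = 0" by (subst (asm) sum_nonneg_eq_0_iff) auto
      then have "\<forall>y. pmf q y = pmf p y" using eqS unfolding S_def by (metis DiffI UNIV_I mem_Collect_eq order_le_less pmf_nonneg)
      then show False using assms pmf_eqI by metis
    qed
  qed
  moreover have "(\<Sum>y\<in>S. pmf p y - pmf q y) \<ge> 0"
  proof -
    have "(\<Sum>y\<in>S. pmf p y) = 1"
      using sum_pmf_UNIV'[of p] unfolding S_def
      by (subst (asm) sum.mono_neutral_cong_right[of UNIV "{y. pmf p y > 0}" "pmf p" "pmf p"])
         (auto simp: order_le_less pmf_nonneg)
    moreover have "(\<Sum>y\<in>S. pmf q y) \<le> (\<Sum>y\<in>UNIV. pmf q y)" by (intro sum_mono2) auto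
    ultimately show ?thesis using sum_pmf_UNIV'[of q] by (simp add: sum_subtractf)
  qed
  ultimately show ?thesis unfolding kl_div_def using True eq by simp
qed

lemma bhatt_lt1:
  fixes p q :: "'y::finite pmf"
  assumes "p \<noteq> q"
  shows "(\<Sum>y\<in>UNIV. sqrt (pmf p y * pmf q y)) < 1"
proof -
  have "(\<Sum>y\<in>UNIV. sqrt (pmf p y * pmf q y)) < (\<Sum>y\<in>UNIV. (pmf p y + pmf q y) / 2)"
  proof (rule sum_strict_mono_ex1)
    have t: "sqrt (a * b) \<le> (a + b) / 2 \<and> (a \<noteq> b \<longrightarrow> sqrt (a * b) < (a + b) / 2)" if "a \<ge> 0" "b \<ge> 0" for a b :: real
    proof -
      have "(sqrt a - sqrt b)^2 \<ge> 0" by simp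
      moreover have "a \<noteq> b \<Longrightarrow> (sqrt a - sqrt b)^2 > 0" using that by auto
      moreover have "(sqrt a - sqrt b)^2 = a + b - 2 * sqrt (a * b)"
        using that by (simp add: power2_eq_square algebra_simps real_sqrt_mult)
      ultimately show ?thesis by auto
    qed
    show "\<forall>y\<in>UNIV. sqrt (pmf p y * pmf q y) \<le> (pmf p y + pmf q y) / 2" using t by simp
    obtain y where "pmf p y \<noteq> pmf q y" using assms pmf_eqI by metis
    then show "\<exists>y\<in>UNIV. sqrt (pmf p y * pmf q y) < (pmf p y + pmf q y) / 2" using t[of "pmf p y" "pmf q y"] by auto
  qed simp
  also have "\<dots> = 1" by (simp add: sum_divide_distrib[symmetric] sum.distrib sum_pmf_UNIV')
  finally show ?thesis .
qed

lemma cap_nontriv: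
  fixes Q :: "'x::finite \<Rightarrow> 'y::finite pmf"
  assumes "capacity Q > 0"
  shows "\<exists>x. Q x \<noteq> Q star"
proof (rule ccontr)
  assume "\<not> ?thesis"
  then have Qeq: "Q = (\<lambda>_. Q star)" by auto
  have "mutual_info Q P = 0" for P
  proof -
    have s: "(\<Sum>x'\<in>UNIV. pmf P x' * pmf (Q star) y) = pmf (Q star) y" for y
      by (simp add: sum_distrib_right[symmetric] sum_pmf_UNIV')
    have "mutual_info (\<lambda>_. Q star) P = 0" unfolding mutual_info_def s
      by (intro sum.neutral ballI) simp
    then show ?thesis using Qeq by simp
  qed
  then have "capacity Q = 0" unfolding capacity_def by simp
  then show False using assms by simp
qed



lemma sum_pmf_UNIV'': "(\<Sum>y\<in>(UNIV::'y::finite set). pmf p y) = 1"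
  by (rule sum_pmf_eq_1) auto

lemma chernoff_exp:
  fixes p q :: "'y::finite pmf"
  assumes th: "ereal \<theta> < kl_div p q"
  shows "\<exists>s. 0 < s \<and> s < 1 \<and> (\<Sum>y\<in>UNIV. pmf p y powr (1 - s) * pmf q y powr s) * exp (s * \<theta>) < 1"
proof -
  define Sp where "Sp = {y. pmf p y > 0 \<and> pmf q y > 0}"
  define c where "c y = ln (pmf q y / pmf p y)" for y
  define \<pi> where "\<pi> = (\<Sum>y\<in>Sp. pmf p y)"
  define f where "f s = (\<Sum>y\<in>Sp. pmf p y * exp (s * c y)) * exp (s * \<theta>) - 1" for s
  have phi_eq: "(\<Sum>y\<in>UNIV. pmf p y powr (1 - s) * pmf q y powr s) * exp (s * \<theta>) = f s + 1"
    if "0 < s" "s < 1" for s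
  proof -
    have "(\<Sum>y\<in>UNIV. pmf p y powr (1 - s) * pmf q y powr s) = (\<Sum>y\<in>Sp. pmf p y * exp (s * c y))"
    proof (rule sum.mono_neutral_cong_right)
      show "\<forall>y\<in>UNIV - Sp. pmf p y powr (1 - s) * pmf q y powr s = 0"
        unfolding Sp_def by (auto simp: order_le_less[of 0 "pmf _ _"] pmf_nonneg)
      fix y assume "y \<in> Sp"
      then have pp: "pmf p y > 0" "pmf q y > 0" unfolding Sp_def by auto
      have "pmf p y powr (1 - s) * pmf q y powr s = exp ((1 - s) * ln (pmf p y) + s * ln (pmf q y))"
        using pp by (simp add: powr_def exp_add)
      also have "\<dots> = exp (ln (pmf p y)) * exp (s * c y)"
      proof -
        have "(1 - s) * ln (pmf p y) + s * ln (pmf q y) = ln (pmf p y) + s * c y"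
          unfolding c_def using pp by (simp add: ln_div algebra_simps)
        then show ?thesis by (simp add: exp_add)
      qed
      finally show "pmf p y powr (1 - s) * pmf q y powr s = pmf p y * exp (s * c y)" using pp by simp
    qed auto
    then show ?thesis unfolding f_def by simp
  qed
  have f0: "f 0 = \<pi> - 1" unfolding f_def \<pi>_def by simp
  have D: "DERIV f 0 :> (\<Sum>y\<in>Sp. pmf p y * c y) + \<pi> * \<theta>"
  proof -
    have "DERIV (\<lambda>s. \<Sum>y\<in>Sp. pmf p y * exp (s * c y)) 0 :> (\<Sum>y\<in>Sp. pmf p y * c y)"
      by (rule derivative_eq_intros refl | simp add: mult.commute)+
    moreover have "DERIV (\<lambda>s. exp (s * \<theta>)) 0 :> exp (0 * \<theta>) * \<theta>"
      by (rule derivative_eq_intros refl | simp)+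
    ultimately have "DERIV (\<lambda>s. (\<Sum>y\<in>Sp. pmf p y * exp (s * c y)) * exp (s * \<theta>)) 0 :>
       (\<Sum>y\<in>Sp. pmf p y * c y) * exp (0 * \<theta>) + (exp (0 * \<theta>) * \<theta>) * (\<Sum>y\<in>Sp. pmf p y * exp (0 * c y))"
      by (rule DERIV_mult)
    then have "DERIV f 0 :> (\<Sum>y\<in>Sp. pmf p y * c y) * exp (0 * \<theta>) + (exp (0 * \<theta>) * \<theta>) * (\<Sum>y\<in>Sp. pmf p y * exp (0 * c y)) - 0"
      unfolding f_def by (intro DERIV_diff DERIV_const)
    then show ?thesis unfolding \<pi>_def by (simp add: mult.commute)
  qed
  have ev: "\<exists>b>0. \<forall>s>0. s < b \<longrightarrow> f s < 0"
  proof (cases "\<pi> < 1")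
    case True
    have "(f \<longlongrightarrow> f 0) (at_right 0)"
      using DERIV_isCont[OF D] by (simp add: isCont_def filterlim_at_split)
    then have "eventually (\<lambda>s. f s < 0) (at_right 0)" using True f0 by (intro order_tendstoD(2)) auto
    then show ?thesis by (simp add: eventually_at_right_field)
  next
    case False
    have sub: "pmf q y > 0" if "pmf p y > 0" for y
    proof (rule ccontr)
      assume "\<not> pmf q y > 0"
      then have yS: "y \<notin> Sp" unfolding Sp_def by auto
      have "\<pi> + pmf p y \<le> (\<Sum>y\<in>UNIV. pmf p y)"
      proof -
        have "\<pi> + pmf p y = (\<Sum>y\<in>insert y Sp. pmf p y)" unfolding \<pi>_def using yS by simp
        also have "\<dots> \<le> (\<Sum>y\<in>UNIV. pmf p y)" by (intro sum_mono2) auto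
        finally show ?thesis .
      qed
      then show False using False that sum_pmf_UNIV''[of p] by simp
    qed
    then have kl: "kl_div p q = ereal (\<Sum>y\<in>UNIV. if pmf p y = 0 then 0 else pmf p y * ln (pmf p y / pmf q y))"
      unfolding kl_div_def by simp
    have "(\<Sum>y\<in>UNIV. if pmf p y = 0 then 0 else pmf p y * ln (pmf p y / pmf q y)) = - (\<Sum>y\<in>Sp. pmf p y * c y)"
    proof -
      have "(\<Sum>y\<in>UNIV. if pmf p y = 0 then 0 else pmf p y * ln (pmf p y / pmf q y)) = (\<Sum>y\<in>Sp. pmf p y * ln (pmf p y / pmf q y))"
        unfolding Sp_def using sub by (intro sum.mono_neutral_cong_right) (auto simp: order_le_less[of 0 "pmf _ _"] pmf_nonneg)
      also have "\<dots> = (\<Sum>y\<in>Sp. - (pmf p y * c y))"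
        unfolding c_def Sp_def by (intro sum.cong refl) (auto simp: ln_div algebra_simps)
      finally show ?thesis by (simp add: sum_negf)
    qed
    with kl th have lt: "\<theta> < - (\<Sum>y\<in>Sp. pmf p y * c y)" by simp
    have "\<pi> \<le> 1"
    proof -
      have "\<pi> \<le> (\<Sum>y\<in>UNIV. pmf p y)" unfolding \<pi>_def by (intro sum_mono2) auto
      then show ?thesis by (simp add: sum_pmf_UNIV'')
    qed
    then have "\<pi> = 1" using False by simp
    then have "(\<Sum>y\<in>Sp. pmf p y * c y) + \<pi> * \<theta> < 0" using lt by simp
    from DERIV_neg_dec_right[OF D this] obtain d where "d > 0" "\<forall>h>0. h < d \<longrightarrow> f 0 > f (0 + h)" by blast
    then show ?thesis using f0 \<open>\<pi> = 1\<close> by auto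
  qed
  then obtain b where b: "b > 0" "\<forall>s>0. s < b \<longrightarrow> f s < 0" by blast
  define s where "s = min (b/2) (1/2)"
  have s: "0 < s" "s < 1" "s < b" using b unfolding s_def by auto
  then show ?thesis using phi_eq[OF s(1,2)] b by (intro exI[of _ s]) auto
qed



lemma small_recip: assumes "(c::real) > 0" shows "\<exists>j::nat. j > 0 \<and> a / real j < c"
proof -
  obtain n :: nat where n: "\<bar>a\<bar> / c \<le> real n" using real_arch_simple by blast
  have "\<bar>a\<bar> < c * real (n + 1)" using n assms by (simp add: field_simps)
  then have "a / real (n + 1) < c" by (simp add: field_simps)
  then show ?thesis by (intro exI[of _ "n+1"]) auto
qed

lemma div_bounds: assumes "j > 0" shows "real (N div j) \<le> real N / real j" "real N / real j - 1 \<le> real (N div j)"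
proof -
  have e: "real N = real j * real (N div j) + real (N mod j)"
    by (metis div_mult_mod_eq mult.commute of_nat_add of_nat_mult)
  have m: "real (N mod j) < real j" using assms by simp
  have a': "real j * real (N div j) \<le> real N" using e by simp
  have b': "real N < real j * (real (N div j) + 1)" using e m by (simp add: algebra_simps)
  show "real (N div j) \<le> real N / real j" using a' assms by (simp add: field_simps)
  show "real N / real j - 1 \<le> real (N div j)" using b' assms by (simp add: field_simps)
qed

lemma pow_exp: "0 < (x::real) \<Longrightarrow> x ^ n = exp (real n * ln x)"
  by (simp add: exp_of_nat_mult)

lemma lim_exp_neg: "(\<kappa>::real) > 0 \<Longrightarrow> (\<lambda>N. exp (- \<kappa> * real N)) \<longlonglongrightarrow> 0"
  by real_asymp

lemma lim_N_exp_neg: "(\<kappa>::real) > 0 \<Longrightarrow> (\<lambda>N. real N * exp (- \<kappa> * real N)) \<longlonglongrightarrow> 0"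
  by real_asymp

lemma lim_div: assumes "k > 0" shows "(\<lambda>N. real (N div k + 1) / real N) \<longlonglongrightarrow> 1 / real k"
proof (rule tendsto_sandwich[where f="\<lambda>N. 1 / real k - 1 / real N" and h="\<lambda>N. 1 / real k + 1 / real N"])
  show "\<forall>\<^sub>F N in sequentially. 1 / real k - 1 / real N \<le> real (N div k + 1) / real N"
    using eventually_gt_at_top[of 0]
  proof eventually_elim
    case (elim N)
    have "real N / real k - 1 \<le> real (N div k)" using div_bounds(2)[OF assms] by blast
    then have "real N / real k \<le> real (N div k + 1)" by simp
    then have "(real N / real k) / real N \<le> real (N div k + 1) / real N"
      by (intro divide_right_mono) auto
    moreover have "(real N / real k) / real N = 1 / real k" using elim by simp
    moreover have "1 / real N \<ge> 0" by simp
    ultimately show ?case by linarith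
  qed
  show "\<forall>\<^sub>F N in sequentially. real (N div k + 1) / real N \<le> 1 / real k + 1 / real N"
    using eventually_gt_at_top[of 0]
  proof eventually_elim
    case (elim N)
    have "real (N div k) \<le> real N / real k" using div_bounds(1)[OF assms] by blast
    then have "real (N div k + 1) \<le> real N / real k + 1" by simp
    then have "real (N div k + 1) / real N \<le> (real N / real k + 1) / real N"
      by (intro divide_right_mono) auto
    also have "(real N / real k + 1) / real N = 1 / real k + 1 / real N" using elim by (simp add: add_divide_distrib)
    finally show ?case .
  qed
  have z: "(\<lambda>N. 1 / real N) \<longlonglongrightarrow> 0" by (rule lim_const_over_n)
  show "(\<lambda>N. 1 / real k - 1 / real N) \<longlonglongrightarrow> 1 / real k"
    using tendsto_diff[OF tendsto_const z, of "1 / real k"] by simp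
  show "(\<lambda>N. 1 / real k + 1 / real N) \<longlonglongrightarrow> 1 / real k"
    using tendsto_add[OF tendsto_const z, of "1 / real k"] by simp
qed



lemma exp_bound_pow:
  assumes "0 < r" "r \<le> 1" "c \<le> real K"
  shows "r ^ K \<le> exp (c * ln r)"
proof -
  have "r ^ K = exp (real K * ln r)" using assms by (simp add: pow_exp)
  also have "\<dots> \<le> exp (c * ln r)" using assms by (intro exp_mono mult_right_mono_neg) auto
  finally show ?thesis .
qed

lemma pow_le_exp_upper:
  assumes "1 \<le> r" "real K \<le> c"
  shows "r ^ K \<le> exp (c * ln r)"
proof -
  have "r ^ K = exp (real K * ln r)" using assms by (simp add: pow_exp)
  also have "\<dots> \<le> exp (c * ln r)" using assms by (intro exp_mono mult_right_mono) auto
  finally show ?thesis .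
qed

theorem proposition2:
  fixes Q :: "'x::finite \<Rightarrow> 'y::finite pmf" and star :: 'x and \<alpha> :: real
  assumes "\<forall>y. \<exists>x. pmf (Q x) y > 0"
    and "capacity Q > 0"
    and "ereal \<alpha> < (MAX x. kl_div (Q x) (Q star))"
  shows "\<exists>(M :: nat \<Rightarrow> nat) (cw :: nat \<Rightarrow> nat \<Rightarrow> nat \<Rightarrow> 'x)
            (dec :: nat \<Rightarrow> nat \<Rightarrow> ((nat \<Rightarrow> 'y) \<Rightarrow> nat) \<times> ((nat \<Rightarrow> 'y) \<Rightarrow> nat)).
           (\<forall>N. M N \<ge> 2) \<and>
           (\<exists>L>0. (\<lambda>N. ln (real (M N)) / real N) \<longlonglongrightarrow> L) \<and>
           (\<forall>N A. valid_decoder (dec N A)) \<and>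
           (\<forall>\<epsilon>>0. \<exists>N0. \<forall>N\<ge>N0.
              error_prob Q star N (M N) (cw N) (dec N (async_level \<alpha> \<epsilon> N))
                (async_level \<alpha> \<epsilon> N) \<le> \<epsilon>)"
proof -
  define kl where "kl x = kl_div (Q x) (Q star)" for x
  have finr: "finite (range kl)" by simp
  have "Max (range kl) \<in> range kl" using finr by (intro Max_in) auto
  then obtain xs where "Max (range kl) = kl xs" by (rule imageE)
  then have xs: "kl xs = (MAX x. kl x)" by simp
  have klmax: "kl x \<le> kl xs" for x unfolding xs by (intro Max_ge) auto
  obtain x0 where x0: "Q x0 \<noteq> Q star" using cap_nontriv[OF assms(2)] by blast
  have klpos: "kl xs > 0" using gibbs[OF x0] klmax[of x0] unfolding kl_def by (metis less_le_trans)
  have aklt: "ereal \<alpha> < kl xs" using assms(3) xs unfolding kl_def by simp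
  define \<alpha>p where "\<alpha>p = max \<alpha> 0"
  have "ereal \<alpha>p < kl xs" using aklt klpos unfolding \<alpha>p_def by (cases "\<alpha> \<le> 0") (auto simp: max_def zero_ereal_def[symmetric])
  then obtain \<theta> where th: "ereal \<alpha>p < ereal \<theta>" "ereal \<theta> < kl xs" using ereal_dense2 by blast
  have th1: "\<alpha>p < \<theta>" using th by simp
  have \<alpha>p0: "\<alpha>p \<ge> 0" "\<alpha> \<le> \<alpha>p" unfolding \<alpha>p_def by auto
  have th0: "\<theta> > 0" using th1 \<alpha>p0 by simp
  have QQ: "Q xs \<noteq> Q star" using klpos kl_self unfolding kl_def by (metis less_irrefl)
  have xsstar: "xs \<noteq> star" using QQ by auto
  obtain s where s: "0 < s" "s < 1"
      and sphi: "(\<Sum>y\<in>UNIV. pmf (Q xs) y powr (1 - s) * pmf (Q star) y powr s) * exp (s * \<theta>) < 1"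
    using chernoff_exp[of \<theta> "Q xs" "Q star"] th(2) unfolding kl_def by blast
  define \<phi> where "\<phi> = (\<Sum>y\<in>UNIV. pmf (Q xs) y powr (1 - s) * pmf (Q star) y powr s)"
  define B where "B = (\<Sum>y\<in>UNIV. sqrt (pmf (Q xs) y * pmf (Q star) y))"
  have \<phi>0: "\<phi> \<ge> 0" unfolding \<phi>_def by (intro sum_nonneg) auto
  have e1: "exp (s * \<theta>) \<ge> 1" using s th0 by simp
  have \<phi>1: "\<phi> \<le> 1"
  proof -
    have "\<phi> * 1 \<le> \<phi> * exp (s * \<theta>)" using \<phi>0 e1 by (intro mult_left_mono) auto
    then show ?thesis using sphi unfolding \<phi>_def by simp
  qed
  have B0: "B \<ge> 0" unfolding B_def by (intro sum_nonneg) auto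
  have B1: "B < 1" unfolding B_def by (rule bhatt_lt1[OF QQ])
  define r1 where "r1 = \<phi> * exp (s * \<theta>)"
  have r1: "0 \<le> r1" "r1 < 1" unfolding r1_def using \<phi>0 sphi \<phi>_def by auto
  define r0 where "r0 = max r1 (1/2)"
  have r0: "0 < r0" "r0 < 1" "r1 \<le> r0" unfolding r0_def using r1 by auto
  define b0 where "b0 = max B (1/2)"
  have b0: "0 < b0" "b0 < 1" "B \<le> b0" unfolding b0_def using B1 by auto
  define \<beta> where "\<beta> = (1 + \<alpha>p / \<theta>) / 2"
  have \<beta>: "0 < \<beta>" "\<beta> < 1" using th1 th0 \<alpha>p0 unfolding \<beta>_def by (auto simp: field_simps)
  define \<delta> where "\<delta> = (\<theta> - \<alpha>p) / 2"
  have \<delta>: "\<delta> > 0" "\<beta> * \<theta> = \<alpha>p + \<delta>" unfolding \<delta>_def \<beta>_def using th1 th0 by (auto simp: field_simps)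
  define c0 where "c0 = (1 - \<beta>) * ln (4/3) / 2"
  have c0: "c0 > 0" unfolding c0_def using \<beta> by simp
  obtain j :: nat where j: "j > 0" "ln 2 / real j < c0" using small_recip[OF c0] by blast
  have lnb0: "ln b0 < 0" using b0 by simp
  have "min (min \<delta> (- ln b0 / real j)) c0 > 0" using \<delta> lnb0 j c0 by (simp add: divide_neg_pos)
  then obtain k :: nat where k: "k > 0" "ln 2 / real k < min (min \<delta> (- ln b0 / real j)) c0"
    using small_recip by blast
  define K where "K N = nat \<lceil>\<beta> * real N\<rceil>" for N
  define n where "n N = N - K N" for N
  define d where "d N = N div j" for N
  define M where "M N = (2::nat) ^ (N div k + 1)" for N
  define Dsel where "Dsel N = (SOME D. goodc xs star (K N) N (n N) (d N) D (M N))" for N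
  define cw where "cw N m = cws xs star (K N) (Dsel N m)" for N m
  define dec where "dec N A = mldec Q star N A (M N) (cw N)" for N A
  have Kge: "real (K N) \<ge> \<beta> * real N" for N
  proof -
    have "\<beta> * real N \<ge> 0" using \<beta> by simp
    then show ?thesis unfolding K_def by (simp add: le_of_int_ceiling)
  qed
  have Kle: "real (K N) \<le> \<beta> * real N + 1" for N
  proof -
    have "\<beta> * real N \<ge> 0" using \<beta> by simp
    then show ?thesis unfolding K_def using of_int_ceiling_le_add_one[of "\<beta> * real N"] by simp
  qed
  have KN: "K N \<le> N" for N
  proof -
    have "\<beta> * real N \<le> real N" using \<beta> by (simp add: mult_left_le_one_le)
    then have "\<lceil>\<beta> * real N\<rceil> \<le> int N" by (simp add: ceiling_le_iff)
    then show ?thesis by (simp only: K_def nat_le_iff)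
  qed
  have nN: "N = K N + n N" for N unfolding n_def using KN[of N] by simp
  have nge: "real (n N) \<ge> (1 - \<beta>) * real N - 1" for N
    using nN[of N] Kle[of N] by (simp add: algebra_simps)
  have Mge: "M N \<ge> 2" for N
  proof -
    have "(2::nat) ^ 1 \<le> 2 ^ (N div k + 1)" by (intro power_increasing) auto
    then show ?thesis unfolding M_def by simp
  qed
  have Mreal: "real (M N) \<le> 2 * exp (real N / real k * ln 2)" for N
  proof -
    have "real (M N) = 2 * 2 ^ (N div k)" unfolding M_def by simp
    also have "(2::real) ^ (N div k) \<le> exp (real N / real k * ln 2)"
      by (rule pow_le_exp_upper) (use div_bounds(1)[OF k(1)] in auto)
    finally show ?thesis by simp
  qed
  have lim: "(\<lambda>N. ln (real (M N)) / real N) \<longlonglongrightarrow> ln 2 / real k"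
  proof -
    have eq1: "ln (real (M N)) / real N = real (N div k + 1) / real N * ln 2" for N
    proof -
      have "real (M N) = 2 ^ (N div k + 1)" unfolding M_def by simp
      then have "ln (real (M N)) = real (N div k + 1) * ln 2" by (simp only: ln_realpow)
      then show ?thesis by simp
    qed
    have "(\<lambda>N. real (N div k + 1) / real N * ln 2) \<longlonglongrightarrow> 1 / real k * ln 2"
      by (intro tendsto_mult lim_div k(1) tendsto_const)
    then have "(\<lambda>N. ln (real (M N)) / real N) \<longlonglongrightarrow> 1 / real k * ln 2"
      by (simp only: eq1)
    then show ?thesis by simp
  qed
  define G where "G N \<longleftrightarrow> real (M N) * (2 * real N) * 2 ^ d N * (3/2) ^ n N < 2 ^ n N" for N
  define \<kappa>g where "\<kappa>g = 2 * c0 - ln 2 / real k - ln 2 / real j"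
  have \<kappa>g: "\<kappa>g > 0" unfolding \<kappa>g_def using j k by simp
  have Gbound: "real (M N) * (2 * real N) * 2 ^ d N * (3/4) ^ n N \<le> 16/3 * (real N * exp (- \<kappa>g * real N))" for N
  proof -
    have a: "(2::real) ^ d N \<le> exp (real N / real j * ln 2)"
      by (rule pow_le_exp_upper) (use div_bounds(1)[OF j(1)] in \<open>auto simp: d_def\<close>)
    have b: "(3/4::real) ^ n N \<le> exp (((1 - \<beta>) * real N - 1) * ln (3/4))"
      by (rule exp_bound_pow) (use nge in auto)
    have c: "exp (((1 - \<beta>) * real N - 1) * ln (3/4)) = 4/3 * exp (- (2 * c0) * real N)"
    proof -
      have l34: "ln (3/4::real) = - ln (4/3)" by (simp add: ln_div)
      have c2: "2 * c0 = (1 - \<beta>) * ln (4/3)" by (simp add: c0_def)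
      have "((1 - \<beta>) * real N - 1) * ln (3/4) = - (2 * c0) * real N + ln (4/3)"
        unfolding l34 c2 by (simp add: algebra_simps)
      then have "exp (((1 - \<beta>) * real N - 1) * ln (3/4)) = exp (- (2 * c0) * real N) * exp (ln (4/3))"
        by (simp only: exp_add)
      then show ?thesis by simp
    qed
    have "real (M N) * (2 * real N) * 2 ^ d N * (3/4) ^ n N
        \<le> (2 * exp (real N / real k * ln 2)) * (2 * real N) * exp (real N / real j * ln 2) * (4/3 * exp (- (2 * c0) * real N))"
      using Mreal[of N] a b c by (intro mult_mono) auto
    also have "\<dots> = 16/3 * (real N * (exp (real N / real k * ln 2) * exp (real N / real j * ln 2) * exp (- (2 * c0) * real N)))"
      by simp
    also have "exp (real N / real k * ln 2) * exp (real N / real j * ln 2) * exp (- (2 * c0) * real N) = exp (- \<kappa>g * real N)"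
      unfolding \<kappa>g_def by (simp add: exp_add[symmetric] algebra_simps)
    finally show ?thesis .
  qed
  have evG: "eventually G sequentially"
  proof -
    have "(\<lambda>N. 16/3 * (real N * exp (- \<kappa>g * real N))) \<longlonglongrightarrow> 16/3 * 0"
      by (rule tendsto_mult[OF tendsto_const lim_N_exp_neg[OF \<kappa>g]])
    from order_tendstoD(2)[OF this, of 1]
    have "eventually (\<lambda>N. 16/3 * (real N * exp (- \<kappa>g * real N)) < 1) sequentially" by simp
    then show ?thesis
    proof eventually_elim
      case (elim N)
      have "real (M N) * (2 * real N) * 2 ^ d N * (3/4) ^ n N < 1" using Gbound[of N] elim by linarith
      then have "real (M N) * (2 * real N) * 2 ^ d N * (3/4) ^ n N * 2 ^ n N < 1 * 2 ^ n N"
        by (intro mult_strict_right_mono) auto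
      moreover have "(3/2::real) ^ n N = (3/4) ^ n N * 2 ^ n N" by (simp add: power_mult_distrib[symmetric])
      ultimately show ?case unfolding G_def by (simp add: mult.assoc)
    qed
  qed
  define \<kappa>1 where "\<kappa>1 = - \<beta> * ln r0"
  define \<kappa>2 where "\<kappa>2 = \<delta> - ln 2 / real k"
  define \<kappa>3 where "\<kappa>3 = - (ln 2 / real k + ln b0 / real j)"
  have \<kappa>: "\<kappa>1 > 0" "\<kappa>2 > 0" "\<kappa>3 > 0" unfolding \<kappa>1_def \<kappa>2_def \<kappa>3_def
    using \<beta> r0 k by (auto simp: mult_pos_neg)
  define u where "u N = exp (- \<kappa>1 * real N) + 4 * exp (- \<kappa>2 * real N) + 8 * (real N * exp (- \<kappa>3 * real N))" for N
  have ulim: "u \<longlonglongrightarrow> 0 + 4 * 0 + 8 * 0" unfolding u_def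
    by (intro tendsto_add tendsto_mult tendsto_const lim_exp_neg lim_N_exp_neg \<kappa>)
  have T1: "exp (s * (\<theta> * real (K N))) * \<phi> ^ K N \<le> exp (- \<kappa>1 * real N)" for N
  proof -
    have "exp (s * (\<theta> * real (K N))) = exp (s * \<theta>) ^ K N"
      by (simp add: exp_of_nat_mult[symmetric] mult_ac)
    then have "exp (s * (\<theta> * real (K N))) * \<phi> ^ K N = r1 ^ K N"
      unfolding r1_def by (simp add: power_mult_distrib mult.commute)
    also have "\<dots> \<le> r0 ^ K N" using r1 r0 by (intro power_mono) auto
    also have "\<dots> \<le> exp (\<beta> * real N * ln r0)" using r0 Kge[of N] by (intro exp_bound_pow) auto
    also have "\<beta> * real N * ln r0 = - \<kappa>1 * real N" unfolding \<kappa>1_def by simp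
    finally show ?thesis .
  qed
  have T2: "real A * real (M N) * exp (- (\<theta> * real (K N))) \<le> 4 * exp (- \<kappa>2 * real N)"
    if "real A \<le> exp ((\<alpha> - \<epsilon>) * real N) + 1" "\<epsilon> > 0" for N A \<epsilon>
  proof -
    have "exp ((\<alpha> - \<epsilon>) * real N) \<le> exp (\<alpha>p * real N)" using that(2) \<alpha>p0 by (intro exp_mono mult_right_mono) auto
    moreover have "1 \<le> exp (\<alpha>p * real N)" using \<alpha>p0 by simp
    ultimately have a: "real A \<le> 2 * exp (\<alpha>p * real N)" using that(1) by linarith
    have b: "exp (- (\<theta> * real (K N))) \<le> exp (- (\<theta> * (\<beta> * real N)))"
      using Kge[of N] th0 by (intro exp_mono) (simp add: mult_left_mono)
    have "real A * real (M N) * exp (- (\<theta> * real (K N)))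
        \<le> (2 * exp (\<alpha>p * real N)) * (2 * exp (real N / real k * ln 2)) * exp (- (\<theta> * (\<beta> * real N)))"
      using a Mreal[of N] b by (intro mult_mono) auto
    also have "\<dots> = 4 * exp (\<alpha>p * real N + real N / real k * ln 2 - \<theta> * (\<beta> * real N))"
      by (simp add: exp_add exp_diff exp_minus field_simps)
    also have "\<alpha>p * real N + real N / real k * ln 2 - \<theta> * (\<beta> * real N) = - \<kappa>2 * real N"
    proof -
      have "\<theta> * (\<beta> * real N) = (\<beta> * \<theta>) * real N" by simp
      then show ?thesis using \<delta>(2) unfolding \<kappa>2_def by (simp add: algebra_simps)
    qed
    finally show ?thesis .
  qed
  have T3: "2 * real N * real (M N) * B ^ d N \<le> 8 * (real N * exp (- \<kappa>3 * real N))" for N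
  proof -
    have "B ^ d N \<le> b0 ^ d N" using B0 b0 by (intro power_mono) auto
    also have "\<dots> \<le> exp ((real N / real j - 1) * ln b0)"
      using b0 div_bounds(2)[OF j(1), of N] by (intro exp_bound_pow) (auto simp: d_def)
    also have "\<dots> = exp (real N / real j * ln b0) / b0"
      using b0 by (simp add: algebra_simps exp_diff)
    also have "\<dots> \<le> 2 * exp (real N / real j * ln b0)"
      using b0 by (simp add: field_simps b0_def)
    finally have a: "B ^ d N \<le> 2 * exp (real N / real j * ln b0)" .
    have "2 * real N * real (M N) * B ^ d N \<le> 2 * real N * (2 * exp (real N / real k * ln 2)) * (2 * exp (real N / real j * ln b0))"
      using a Mreal[of N] B0 by (intro mult_mono) auto
    also have "\<dots> = 8 * (real N * (exp (real N / real k * ln 2) * exp (real N / real j * ln b0)))" by simp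
    also have "exp (real N / real k * ln 2) * exp (real N / real j * ln b0) = exp (- \<kappa>3 * real N)"
      unfolding \<kappa>3_def by (simp add: exp_add[symmetric] algebra_simps)
    finally show ?thesis .
  qed
  have ebound: "error_prob Q star N (M N) (cw N) (dec N A) A \<le> u N"
    if N1: "N \<ge> 1" and GN: "G N" and A: "A = async_level \<alpha> \<epsilon> N" and eps: "\<epsilon> > 0" for N A \<epsilon>
  proof -
    obtain D0 where "goodc xs star (K N) N (n N) (d N) D0 (M N)"
      using greedy[OF xsstar nN[of N] N1, of "M N" "d N"] GN unfolding G_def by blast
    then have good: "goodc xs star (K N) N (n N) (d N) (Dsel N) (M N)"
      unfolding Dsel_def by (rule someI[where P="\<lambda>D. goodc xs star (K N) N (n N) (d N) D (M N)"])
    have dist: "d N \<le> card {i. hyp star N (cw N m) t i \<noteq> hyp star N (cw N m') t' i}"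
      if "m < M N" "m' < M N" "m \<noteq> m'" "t < t' + N" "t' < t + N" for m m' t t'
    proof -
      have "card {i. hyp star N (cw N m) t i \<noteq> hyp star N (cw N m') t' i}
          = card {i. hyp star N (cw N m) N i \<noteq> hyp star N (cw N m') (N + t' - t) i}"
        using that(4) by (rule diff_norm)
      moreover have "N + t' - t \<in> {1..<2*N}" using that(4,5) by auto
      ultimately show ?thesis using good that(1-3) unfolding goodc_def cw_def by auto
    qed
    have A1: "A \<ge> 1" unfolding A async_level_def
    proof -
      have "exp ((\<alpha> - \<epsilon>) * real N) > 0" by simp
      then have "\<lceil>exp ((\<alpha> - \<epsilon>) * real N)\<rceil> \<ge> 1" by (simp add: zero_less_ceiling)
      then have "nat 1 \<le> nat \<lceil>exp ((\<alpha> - \<epsilon>) * real N)\<rceil>" by (rule nat_mono)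
      then show "1 \<le> nat \<lceil>exp ((\<alpha> - \<epsilon>) * real N)\<rceil>" by simp
    qed
    have Areal: "real A \<le> exp ((\<alpha> - \<epsilon>) * real N) + 1"
    proof -
      have "exp ((\<alpha> - \<epsilon>) * real N) > 0" by simp
      then show ?thesis unfolding A async_level_def
        using of_int_ceiling_le_add_one[of "exp ((\<alpha> - \<epsilon>) * real N)"] by simp
    qed
    have M1: "M N \<ge> 1" using Mge[of N] by simp
    define Bd where "Bd = exp (s * (\<theta> * real (K N))) * \<phi> ^ K N + real A * real (M N) * exp (- (\<theta> * real (K N)))
       + 2 * real N * real (M N) * B ^ d N"
    have per: "measure (out_measure Q star N (cw N m) l) {y. snd (dec N A) y \<noteq> m} \<le> Bd"
      if "m < M N" "l \<in> {1..A}" for m l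
      unfolding Bd_def \<phi>_def B_def dec_def
    proof (rule error_bound[OF A1 M1 that])
      show "cw N m j = xs \<or> cw N m j = star" for m j unfolding cw_def cws_def by auto
      show "cw N m j = xs" if "m < M N" "j < K N" for m j using that unfolding cw_def cws_def by auto
      show "K N \<le> N" by (rule KN)
      show "d N \<le> card {i. hyp star N (cw N m) t i \<noteq> hyp star N (cw N m') t' i}"
        if "m < M N" "m' < M N" "m \<noteq> m'" "t < t' + N" "t' < t + N" for m m' t t'
        using dist that by blast
      show "0 < s" "s < 1" by (rule s(1), rule s(2))
    qed (simp_all add: \<phi>_def B_def \<phi>1[unfolded \<phi>_def] B1[unfolded B_def, THEN less_imp_le])
    have "error_prob Q star N (M N) (cw N) (dec N A) A
        = (1 / (real A * real (M N))) * (\<Sum>m<M N. \<Sum>l\<in>{1..A}. measure (out_measure Q star N (cw N m) l) {y. snd (dec N A) y \<noteq> m})"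
      unfolding error_prob_def by simp
    also have "\<dots> \<le> (1 / (real A * real (M N))) * (\<Sum>m<M N. \<Sum>l\<in>{1..A}. Bd)"
      using per by (intro mult_left_mono sum_mono) auto
    also have "\<dots> = Bd" using A1 M1 by simp
    also have "Bd \<le> u N" unfolding Bd_def u_def
      using T1[of N] T2[OF Areal eps] T3[of N] by linarith
    finally show ?thesis .
  qed
  show ?thesis
  proof (intro exI[of _ M] exI[of _ cw] exI[of _ dec] conjI)
    show "\<forall>N. 2 \<le> M N" using Mge by blast
    show "\<exists>L>0. (\<lambda>N. ln (real (M N)) / real N) \<longlonglongrightarrow> L" using lim k by (intro exI[of _ "ln 2 / real k"]) auto
    show "\<forall>N A. valid_decoder (dec N A)" unfolding dec_def by (intro allI valid_mldec)
    show "\<forall>\<epsilon>>0. \<exists>N0. \<forall>N\<ge>N0. error_prob Q star N (M N) (cw N) (dec N (async_level \<alpha> \<epsilon> N)) (async_level \<alpha> \<epsilon> N) \<le> \<epsilon>"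
    proof (intro allI impI)
      fix \<epsilon> :: real assume eps: "\<epsilon> > 0"
      have "eventually (\<lambda>N. u N < \<epsilon>) sequentially"
        using order_tendstoD(2)[OF ulim, of \<epsilon>] eps by simp
      then have "eventually (\<lambda>N. u N < \<epsilon> \<and> G N \<and> N \<ge> 1) sequentially"
        using evG eventually_ge_at_top[of 1] by eventually_elim auto
      then obtain N0 where N0: "\<And>N. N \<ge> N0 \<Longrightarrow> u N < \<epsilon> \<and> G N \<and> N \<ge> 1"
        unfolding eventually_sequentially by blast
      show "\<exists>N0. \<forall>N\<ge>N0. error_prob Q star N (M N) (cw N) (dec N (async_level \<alpha> \<epsilon> N)) (async_level \<alpha> \<epsilon> N) \<le> \<epsilon>"
      proof (intro exI allI impI)
        fix N assume "N \<ge> N0"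
        with N0 have "u N < \<epsilon>" "G N" "N \<ge> 1" by auto
        then show "error_prob Q star N (M N) (cw N) (dec N (async_level \<alpha> \<epsilon> N)) (async_level \<alpha> \<epsilon> N) \<le> \<epsilon>"
          using ebound[OF _ _ refl eps, of N] by fastforce
      qed
    qed
  qed
qed

end
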